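(* Let $d\ge 2$ be fixed, $p$ a prime, $\sigma=\lfloor\sqrt{p/d}\rfloor$, and $A=\{1,2,\dots,\sigma\}\subset\mathbb{F}_p$ (elements of $\mathbb{F}_p$ identified with $0,1,\dots,p-1$), and $A^d\subset\mathbb{F}_p^d$ the $d$-fold Cartesian product. Then (i) $x\cdot y\ne 0$ in $\mathbb{F}_p$ for all $x,y\in A^d$, and consequently $x\cdot y\neq 0$ for all $x,y$ in the set $\{\lambda a:\lambda\in\mathbb{F}_p^*,\ a\in A^d\}$; (ii) the number of one-dimensional subspaces (lines through the origin) of $\mathbb{F}_p^d$ that meet $A^d$ is at least $(1-o(1))\frac{2}{\pi^2}\left(\frac{p}{d}\right)^{d/2}$, where $o(1)\to 0$ as $p\to\infty$.
   Context: For $u,v\in\mathbb{F}_p^d$, $u\cdot v=\sum_{i=1}^d u_iv_i$ computed in $\mathbb{F}_p$. *)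

theory Defs
  imports "HOL-Analysis.Analysis"
begin

text \<open>Model of F_p^d: vectors are functions nat => int, supported on {0..<d},
  with coordinates in {0..<p} (the canonical representatives of F_p).\<close>

definition Fp_vecs :: "int \<Rightarrow> nat \<Rightarrow> (nat \<Rightarrow> int) set" where
  "Fp_vecs p d = {x. (\<forall>i<d. x i \<in> {0..<p}) \<and> (\<forall>i\<ge>d. x i = 0)}"

definition fp_dot :: "int \<Rightarrow> nat \<Rightarrow> (nat \<Rightarrow> int) \<Rightarrow> (nat \<Rightarrow> int) \<Rightarrow> int" where
  "fp_dot p d u v = (\<Sum>i<d. u i * v i) mod p"

definition fp_smult :: "int \<Rightarrow> int \<Rightarrow> (nat \<Rightarrow> int) \<Rightarrow> (nat \<Rightarrow> int)" where
  "fp_smult p c v = (\<lambda>i. (c * v i) mod p)"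

definition sigma :: "int \<Rightarrow> nat \<Rightarrow> int" where
  "sigma p d = \<lfloor>sqrt (real_of_int p / real d)\<rfloor>"

definition Ad :: "int \<Rightarrow> nat \<Rightarrow> (nat \<Rightarrow> int) set" where
  "Ad p d = {x. (\<forall>i<d. x i \<in> {1..sigma p d}) \<and> (\<forall>i\<ge>d. x i = 0)}"

definition scaled_Ad :: "int \<Rightarrow> nat \<Rightarrow> (nat \<Rightarrow> int) set" where
  "scaled_Ad p d = {fp_smult p c a | c a. c \<in> {1..<p} \<and> a \<in> Ad p d}"

definition fp_span1 :: "int \<Rightarrow> (nat \<Rightarrow> int) \<Rightarrow> (nat \<Rightarrow> int) set" where
  "fp_span1 p v = {fp_smult p c v | c. c \<in> {0..<p}}"

definition fp_lines :: "int \<Rightarrow> nat \<Rightarrow> (nat \<Rightarrow> int) set set" where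
  "fp_lines p d = {fp_span1 p v | v. v \<in> Fp_vecs p d \<and> v \<noteq> (\<lambda>_. 0)}"

end

theory Submission
  imports Defs
begin

definition V :: "nat \<Rightarrow> int set \<Rightarrow> (nat \<Rightarrow> int) set" where
  "V d B = {x. (\<forall>i<d. x i \<in> B) \<and> (\<forall>i\<ge>d. x i = 0)}"

lemma V_bij: "bij_betw (\<lambda>x. restrict x {..<d}) (V d B) (PiE {..<d} (\<lambda>_. B))"
proof (rule bij_betw_byWitness[where f'="\<lambda>f i. if i < d then f i else 0"])
  show "\<forall>a\<in>V d B. (\<lambda>i. if i < d then restrict a {..<d} i else 0) = a"
  proof
    fix a assume a: "a \<in> V d B"
    show "(\<lambda>i. if i < d then restrict a {..<d} i else 0) = a"
    proof
      fix i
      have h: "\<forall>i\<ge>d. a i = 0" using a unfolding V_def by blast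
      show "(if i < d then restrict a {..<d} i else 0) = a i"
      proof (cases "i < d")
        case True then show ?thesis by simp
      next
        case False then show ?thesis using h by simp
      qed
    qed
  qed
  show "\<forall>a'\<in>PiE {..<d} (\<lambda>_. B). restrict (\<lambda>i. if i < d then a' i else 0) {..<d} = a'"
  proof
    fix a' assume a': "a' \<in> PiE {..<d} (\<lambda>_. B)"
    show "restrict (\<lambda>i. if i < d then a' i else 0) {..<d} = a'"
    proof
      fix i show "restrict (\<lambda>i. if i < d then a' i else 0) {..<d} i = a' i"
      proof (cases "i < d")
        case True then show ?thesis by simp
      next
        case False then have "a' i = undefined" using PiE_arb[OF a', of i] by simp
        then show ?thesis using False by simp
      qed
    qed
  qed
  show "(\<lambda>x. restrict x {..<d}) ` V d B \<subseteq> PiE {..<d} (\<lambda>_. B)"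
  proof
    fix y assume "y \<in> (\<lambda>x. restrict x {..<d}) ` V d B"
    then obtain x where x: "x \<in> V d B" "y = restrict x {..<d}" by blast
    have "\<forall>i\<in>{..<d}. x i \<in> B" using x(1) unfolding V_def by blast
    then show "y \<in> PiE {..<d} (\<lambda>_. B)" unfolding x(2) by (simp only: restrict_PiE_iff)
  qed
  show "(\<lambda>f i. if i < d then f i else 0) ` PiE {..<d} (\<lambda>_. B) \<subseteq> V d B"
  proof
    fix y assume "y \<in> (\<lambda>f i. if i < d then f i else 0) ` PiE {..<d} (\<lambda>_. B)"
    then obtain f where f: "f \<in> PiE {..<d} (\<lambda>_. B)" "y = (\<lambda>i. if i < d then f i else 0)" by blast
    have "\<forall>i<d. f i \<in> B" using f(1) by (auto dest: PiE_mem)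
    then show "y \<in> V d B" unfolding f(2) V_def by simp
  qed
qed

lemma V_card: assumes "finite B" shows "finite (V d B)" "card (V d B) = card B ^ d"
proof -
  have f: "finite (PiE {..<d} (\<lambda>_. B))" using assms by (simp add: finite_PiE)
  show "finite (V d B)" using bij_betw_finite[OF V_bij] f by blast
  have "card (V d B) = card (PiE {..<d} (\<lambda>_. B))" using bij_betw_same_card[OF V_bij] .
  also have "\<dots> = card B ^ d" by (simp add: card_PiE)
  finally show "card (V d B) = card B ^ d" .
qed

lemma bern: fixes x :: real assumes "0 \<le> x" "x \<le> 1" shows "1 - real n * x \<le> (1 - x) ^ n"
proof (induction n)
  case 0 then show ?case by simp
next
  case (Suc n)
  have "1 - real (Suc n) * x \<le> (1 - real n * x) * (1 - x)"
    using assms by (simp add: algebra_simps)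
  also have "\<dots> \<le> (1 - x) ^ n * (1 - x)"
    using Suc assms by (intro mult_right_mono) auto
  finally show ?case by (simp add: mult.commute)
qed

lemma sum_inv_sq: "n \<ge> 2 \<Longrightarrow> (\<Sum>k\<in>{2..n}. 1 / (real k)^2) \<le> 3/4 - 1 / real n"
proof (induction n rule: dec_induct)
  case base then show ?case by simp
next
  case (step n)
  have "(\<Sum>k\<in>{2..Suc n}. 1 / (real k)^2) = (\<Sum>k\<in>{2..n}. 1 / (real k)^2) + 1 / (real (Suc n))^2"
    using step by (simp add: sum.cl_ivl_Suc)
  also have "\<dots> \<le> 3/4 - 1 / real n + 1 / (real (Suc n))^2" using step by simp
  also have "\<dots> \<le> 3/4 - 1 / real (Suc n)"
  proof -
    have "1 / (real (Suc n))^2 \<le> 1 / real n - 1 / real (Suc n)"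
    proof -
      have e: "1 / real n - 1 / real (Suc n) = 1 / (real n * real (Suc n))" using step by (simp add: field_simps)
      have "real n * real (Suc n) \<le> (real (Suc n))^2" by (simp add: power2_eq_square)
      moreover have "0 < real n * real (Suc n)" using step by simp
      ultimately have "1 / (real (Suc n))^2 \<le> 1 / (real n * real (Suc n))" using divide_left_mono[of "real n * real (Suc n)" "(real (Suc n))^2" 1] by auto
      then show ?thesis using e by simp
    qed
    then show ?thesis by simp
  qed
  finally show ?case .
qed

lemma sum_inv_sq': "(\<Sum>k\<in>{2..n}. 1 / (real k)^2) \<le> 3/4"
proof (cases "n \<ge> 2")
  case True
  have "0 \<le> 1 / real n" by simp
  then show ?thesis using sum_inv_sq[OF True] by linarith
next
  case False then have "{2..n} = {}" by auto
  then show ?thesis by simp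
qed

lemma sigma_sq: assumes "p \<ge> 0" "d \<ge> 1" shows "sigma p d ^ 2 * int d \<le> p" "sigma p d \<ge> 0"
proof -
  let ?s = "sqrt (real_of_int p / real d)"
  have s0: "?s \<ge> 0" using assms by simp
  show "sigma p d \<ge> 0" unfolding sigma_def using s0 by simp
  have "real_of_int (sigma p d) \<le> ?s" unfolding sigma_def by simp
  moreover have "0 \<le> real_of_int (sigma p d)" unfolding sigma_def using s0 by simp
  ultimately have "real_of_int (sigma p d) ^ 2 \<le> ?s ^ 2" by (simp add: power_mono)
  also have "\<dots> = real_of_int p / real d" using assms by simp
  finally have "real_of_int (sigma p d) ^ 2 * real d \<le> real_of_int p" using assms by (simp add: field_simps)
  then have "real_of_int (sigma p d ^ 2 * int d) \<le> real_of_int p" by simp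
  then show "sigma p d ^ 2 * int d \<le> p" by linarith
qed

lemma Ad_V: "Ad p d = V d {1..sigma p d}" by (simp add: Ad_def V_def)

definition Prim :: "int \<Rightarrow> nat \<Rightarrow> (nat \<Rightarrow> int) set" where
  "Prim p d = {a \<in> Ad p d. \<forall>k\<in>{2..nat (sigma p d)}. \<not>(\<forall>i<d. int k dvd a i)}"

definition Mk :: "int \<Rightarrow> nat \<Rightarrow> nat \<Rightarrow> (nat \<Rightarrow> int) set" where
  "Mk p d k = {a \<in> Ad p d. \<forall>i<d. int k dvd a i}"

lemma Ad_minus: "Ad p d - Prim p d = (\<Union>k\<in>{2..nat(sigma p d)}. Mk p d k)"
  by (auto simp: Prim_def Mk_def)

lemma Ad_fin: "finite (Ad p d)" "card (Ad p d) = nat (sigma p d) ^ d"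
  using V_card[of "{1..sigma p d}" d] by (simp_all add: Ad_V)

lemma Mk_card:
  assumes k: "k \<ge> 1" and d: "d \<ge> 2" and s: "sigma p d \<ge> 0"
  shows "real (card (Mk p d k)) \<le> real (nat (sigma p d))^d / (real k)^2"
proof -
  let ?s = "sigma p d"
  let ?m = "?s div int k"
  have sub: "Mk p d k \<subseteq> (\<lambda>x i. int k * x i) ` V d {1..?m}"
  proof
    fix a assume a: "a \<in> Mk p d k"
    have a1: "\<forall>i<d. int k dvd a i \<and> a i \<in> {1..?s}" "\<forall>i\<ge>d. a i = 0"
      using a by (auto simp: Mk_def Ad_def)
    define x where "x = (\<lambda>i. a i div int k)"
    have "a = (\<lambda>i. int k * x i)"
    proof
      fix i show "a i = int k * x i"
        using a1 by (cases "i < d") (auto simp: x_def)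
    qed
    moreover have "x \<in> V d {1..?m}"
    proof -
      have "\<forall>i<d. x i \<in> {1..?m}"
      proof (intro allI impI)
        fix i assume "i < d"
        then have "int k dvd a i" "1 \<le> a i" "a i \<le> ?s" using a1 by auto
        then obtain q where q: "a i = int k * q" by blast
        have "x i = q" using q k by (simp add: x_def)
        moreover have "q \<ge> 1"
        proof -
          have "int k * q > 0" using q \<open>1 \<le> a i\<close> by simp
          then have "q > 0" using k by (simp add: zero_less_mult_iff)
          then show ?thesis by simp
        qed
        moreover have "x i \<le> ?m" unfolding x_def using \<open>a i \<le> ?s\<close> k by (simp add: zdiv_mono1)
        ultimately show "x i \<in> {1..?m}" by auto
      qed
      moreover have "\<forall>i\<ge>d. x i = 0" using a1 by (simp add: x_def)
      ultimately show ?thesis by (simp add: V_def)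
    qed
    ultimately show "a \<in> (\<lambda>x i. int k * x i) ` V d {1..?m}" by blast
  qed
  have "card (Mk p d k) \<le> card ((\<lambda>x i. int k * x i) ` V d {1..?m})"
    by (rule card_mono[OF finite_imageI[OF V_card(1)] sub]) simp
  also have "\<dots> \<le> card (V d {1..?m})" by (rule card_image_le) (simp add: V_card)
  also have "\<dots> = nat ?m ^ d" by (simp add: V_card)
  finally have c: "real (card (Mk p d k)) \<le> real (nat ?m) ^ d"
    by (metis of_nat_le_iff of_nat_power)
  have m0: "?m \<ge> 0" using s k by (simp add: pos_imp_zdiv_nonneg_iff)
  have "real_of_int ?m * real k \<le> real_of_int ?s"
  proof -
    have "?m * int k \<le> ?s" using div_mult_mod_eq[of ?s "int k"] pos_mod_sign[of "int k" ?s] k by linarith  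
    then show ?thesis by (metis of_int_le_iff of_int_mult of_int_of_nat_eq)
  qed
  then have mk: "real (nat ?m) * real k \<le> real (nat ?s)" using m0 s by simp
  have "real (nat ?m) ^ d * real k ^ d \<le> real (nat ?s) ^ d"
    by (metis mk power_mono power_mult_distrib of_nat_0_le_iff mult_nonneg_nonneg)
  moreover have "real k ^ 2 \<le> real k ^ d" using k d by (intro power_increasing) auto
  moreover have "real (nat ?m) ^ d * real k ^ 2 \<le> real (nat ?m) ^ d * real k ^ d"
    by (rule mult_left_mono) (use \<open>real k ^ 2 \<le> real k ^ d\<close> in simp_all)
  ultimately have "real (nat ?m) ^ d * real k ^ 2 \<le> real (nat ?s) ^ d" by linarith
  then have "real (nat ?m) ^ d \<le> real (nat ?s) ^ d / real k ^ 2" using k by (simp add: field_simps)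
  then show ?thesis using c by linarith
qed

lemma Prim_card:
  assumes d: "d \<ge> 2" and s: "sigma p d \<ge> 0"
  shows "real (card (Prim p d)) \<ge> real (nat (sigma p d))^d / 4"
proof -
  let ?n = "nat (sigma p d)"
  have PA: "Prim p d \<subseteq> Ad p d" by (auto simp: Prim_def)
  have fP: "finite (Prim p d)" using Ad_fin(1) PA finite_subset by blast
  have "card (Ad p d) = card (Prim p d) + card (Ad p d - Prim p d)"
    using card_Diff_subset[OF fP PA] card_mono[OF Ad_fin(1) PA] by linarith
  then have e: "real (card (Prim p d)) = real ?n ^ d - real (card (Ad p d - Prim p d))"
    using Ad_fin(2)[of p d] by (metis add_diff_cancel_right' of_nat_add of_nat_power diff_add_cancel)
  have "card (Ad p d - Prim p d) \<le> (\<Sum>k\<in>{2..?n}. card (Mk p d k))"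
    unfolding Ad_minus by (rule card_UN_le) simp
  then have "real (card (Ad p d - Prim p d)) \<le> (\<Sum>k\<in>{2..?n}. real (card (Mk p d k)))"
    by (metis of_nat_le_iff of_nat_sum)
  also have "\<dots> \<le> (\<Sum>k\<in>{2..?n}. real ?n ^ d / (real k)^2)"
    by (rule sum_mono) (rule Mk_card, use d s in auto)
  also have "\<dots> = real ?n ^ d * (\<Sum>k\<in>{2..?n}. 1 / (real k)^2)"
    by (simp add: sum_distrib_left)
  also have "\<dots> \<le> real ?n ^ d * (3/4)"
    by (rule mult_left_mono[OF sum_inv_sq']) simp
  finally show ?thesis using e by linarith
qed

lemma prim_one:
  fixes u v :: int
  assumes u: "u \<ge> 1" and cop: "coprime u v" and eq: "\<forall>j<d. u * y j = v * x j"
    and x: "x \<in> Prim p d" and d: "d \<ge> 1"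
  shows "u = 1"
proof (rule ccontr)
  assume "u \<noteq> 1"
  then have u2: "u \<ge> 2" using u by simp
  have dv: "\<forall>j<d. u dvd x j"
  proof (intro allI impI)
    fix j assume "j < d"
    then have "u dvd v * x j" using eq by (metis dvd_triv_left)
    then show "u dvd x j" using cop by (simp add: coprime_dvd_mult_right_iff)
  qed
  have x0: "1 \<le> x 0" "x 0 \<le> sigma p d" using x d by (auto simp: Prim_def Ad_def)
  have "u \<le> x 0" using dv d x0 by (simp add: zdvd_imp_le)
  then have "nat u \<in> {2..nat (sigma p d)}" using u2 x0 by auto
  moreover have "\<forall>i<d. int (nat u) dvd x i" using dv u by simp
  ultimately have "\<exists>i<d. \<not> int (nat u) dvd x i" using x unfolding Prim_def by blast
  then obtain i where "i < d" "\<not> int (nat u) dvd x i" by blast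
  then show False using dv u by simp
qed

lemma span_inj:
  assumes p: "prime p" and d: "d \<ge> 2" and a: "a \<in> Prim p d" and b: "b \<in> Prim p d"
    and eq: "fp_span1 p a = fp_span1 p b"
  shows "a = b"
proof -
  let ?s = "sigma p d"
  have p1: "p > 1" using p by (simp add: prime_gt_1_int)
  have ss: "?s^2 * int d \<le> p" "?s \<ge> 0" using sigma_sq[of p d] p1 d by auto
  have aA: "\<forall>i<d. a i \<in> {1..?s}" "\<forall>i\<ge>d. a i = 0" using a by (auto simp: Prim_def Ad_def)
  have bA: "\<forall>i<d. b i \<in> {1..?s}" "\<forall>i\<ge>d. b i = 0" using b by (auto simp: Prim_def Ad_def)
  have s1: "?s \<ge> 1" using aA d by force
  have sq_lt: "?s^2 < p"
  proof -
    have "?s^2 * 1 < ?s^2 * int d" using s1 d by (intro mult_strict_left_mono) auto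
    then show ?thesis using ss by linarith
  qed
  have s_lt: "?s < p" using sq_lt s1 mult_left_mono[of 1 ?s ?s] unfolding power2_eq_square by linarith
  have "fp_smult p 1 b = b"
  proof
    fix i show "fp_smult p 1 b i = b i"
      using bA s_lt by (cases "i < d") (auto simp: fp_smult_def)
  qed
  then have "b = fp_smult p 1 b \<and> (1::int) \<in> {0..<p}" using p1 by simp
  then have "b \<in> fp_span1 p b" unfolding fp_span1_def by blast
  then have "b \<in> fp_span1 p a" using eq by simp
  then obtain c where c: "b = fp_smult p c a" unfolding fp_span1_def by blast
  have bj: "\<And>j. b j = c * a j - p * (c * a j div p)"
    using c by (simp add: fp_smult_def minus_div_mult_eq_mod[symmetric] mult.commute)
  have cross: "\<And>i j. i < d \<Longrightarrow> j < d \<Longrightarrow> a i * b j = a j * b i"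
  proof -
    fix i j assume ij: "i < d" "j < d"
    have "a i * b j - a j * b i = p * (a j * (c * a i div p) - a i * (c * a j div p))"
      by (simp add: bj algebra_simps)
    then have dv: "p dvd (a i * b j - a j * b i)" by simp
    have ai: "1 \<le> a i" "a i \<le> ?s" "1 \<le> a j" "a j \<le> ?s" using aA ij by auto
    have bi: "1 \<le> b i" "b i \<le> ?s" "1 \<le> b j" "b j \<le> ?s" using bA ij by auto
    have r1: "1 \<le> a i * b j" "a i * b j \<le> ?s^2"
      using mult_mono[of 1 "a i" 1 "b j"] mult_mono[of "a i" ?s "b j" ?s] ai bi
      by (auto simp: power2_eq_square)
    have r2: "1 \<le> a j * b i" "a j * b i \<le> ?s^2"
      using mult_mono[of 1 "a j" 1 "b i"] mult_mono[of "a j" ?s "b i" ?s] ai bi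
      by (auto simp: power2_eq_square)
    have "\<bar>a i * b j - a j * b i\<bar> < p" using r1 r2 sq_lt by linarith
    then have "a i * b j - a j * b i = 0"
    proof (rule contrapos_pp)
      assume "a i * b j - a j * b i \<noteq> 0"
      then have "\<bar>p\<bar> \<le> \<bar>a i * b j - a j * b i\<bar>" using dv by (rule dvd_imp_le_int)
      then show "\<not> \<bar>a i * b j - a j * b i\<bar> < p" using p1 by simp
    qed
    then show "a i * b j = a j * b i" by simp
  qed
  let ?g = "gcd (a 0) (b 0)"
  have a0: "a 0 \<ge> 1" "b 0 \<ge> 1" using aA bA d by auto
  have g0: "?g > 0" using a0 by simp
  obtain g where gdef: "g = ?g" by blast
  obtain u v where uv0: "a 0 = u * ?g" "b 0 = v * ?g" "coprime u v"
    using gcd_coprime_exists[of "a 0" "b 0"] g0 by auto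
  have uv: "a 0 = g * u" "b 0 = g * v" "coprime u v" using uv0 gdef by (simp_all add: mult.commute)
  have g0': "g > 0" using g0 gdef by simp
  have "g * u > 0" "g * v > 0" using uv(1,2) a0 by simp_all
  then have "u > 0" "v > 0" using g0' by (simp_all add: zero_less_mult_iff)
  then have u1: "u \<ge> 1" and v1: "v \<ge> 1" by simp_all
  have e1: "\<forall>j<d. u * b j = v * a j"
  proof (intro allI impI)
    fix j assume "j < d"
    then have "a 0 * b j = a j * b 0" using cross d by simp
    then have "g * (u * b j) = g * (v * a j)" unfolding uv(1,2) by (simp add: algebra_simps)
    then show "u * b j = v * a j" using g0' by simp
  qed
  have "u = 1" by (rule prim_one[OF u1 uv(3) e1 a]) (use d in simp)
  moreover have "v = 1"
    by (rule prim_one[OF v1 _ _ b]) (use uv(3) e1 d in \<open>auto simp: coprime_commute\<close>)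
  ultimately have ab0: "a 0 = b 0" using uv by simp
  show "a = b"
  proof
    fix j show "a j = b j"
    proof (cases "j < d")
      case True
      then have "a 0 * b j = a j * b 0" using cross d by simp
      then show ?thesis using ab0 a0 by (simp add: mult.commute)
    next
      case False then show ?thesis using aA bA by simp
    qed
  qed
qed

lemma Ad_lt:
  assumes p: "prime p" and d: "d \<ge> 2" and a: "a \<in> Ad p d" and i: "i < d"
  shows "a i < p" "a i \<ge> 1"
proof -
  let ?s = "sigma p d"
  have p1: "p > 1" using p by (simp add: prime_gt_1_int)
  have ss: "?s^2 * int d \<le> p" using sigma_sq[of p d] p1 d by auto
  have ai: "1 \<le> a i" "a i \<le> ?s" using a i by (auto simp: Ad_def)
  have h1: "?s * 1 \<le> ?s * ?s" using ai by (intro mult_left_mono) auto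
  have h2: "?s^2 * 1 < ?s^2 * int d" using ai d by (intro mult_strict_left_mono) auto
  show "a i < p" using ss ai h1 h2 unfolding power2_eq_square by linarith
  show "a i \<ge> 1" using ai by simp
qed

lemma lines_ge:
  assumes p: "prime p" and d: "d \<ge> 2"
  shows "card (Prim p d) \<le> card {L \<in> fp_lines p d. L \<inter> Ad p d \<noteq> {}}"
proof -
  have p1: "p > 1" using p by (simp add: prime_gt_1_int)
  have "fp_lines p d \<subseteq> fp_span1 p ` V d {0..<p}"
    unfolding fp_lines_def Fp_vecs_def V_def by blast
  moreover have "finite (fp_span1 p ` V d {0..<p})" using V_card(1) by simp
  ultimately have "finite (fp_lines p d)" by (rule finite_subset)
  then have fin: "finite {L \<in> fp_lines p d. L \<inter> Ad p d \<noteq> {}}" by simp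
  have inj: "inj_on (fp_span1 p) (Prim p d)"
    using span_inj[OF p d] by (auto simp: inj_on_def)
  have img: "fp_span1 p ` Prim p d \<subseteq> {L \<in> fp_lines p d. L \<inter> Ad p d \<noteq> {}}"
  proof
    fix L assume "L \<in> fp_span1 p ` Prim p d"
    then obtain a where a: "a \<in> Prim p d" "L = fp_span1 p a" by blast
    have aA: "a \<in> Ad p d" using a by (simp add: Prim_def)
    have a0: "\<forall>i\<ge>d. a i = 0" using aA by (simp add: Ad_def)
    have fv: "a \<in> Fp_vecs p d" using Ad_lt[OF p d aA] a0 by (force simp: Fp_vecs_def)
    have nz: "a \<noteq> (\<lambda>_. 0)" using Ad_lt(2)[OF p d aA, of 0] d by auto
    have "fp_smult p 1 a = a"
    proof
      fix i show "fp_smult p 1 a i = a i"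
        using Ad_lt[OF p d aA, of i] a0 by (cases "i < d") (auto simp: fp_smult_def)
    qed
    then have "a = fp_smult p 1 a \<and> (1::int) \<in> {0..<p}" using p1 by simp
    then have "a \<in> L" unfolding a(2) fp_span1_def by blast
    moreover have "L \<in> fp_lines p d" using fv nz a(2) unfolding fp_lines_def by blast
    ultimately show "L \<in> {L \<in> fp_lines p d. L \<inter> Ad p d \<noteq> {}}" using aA by blast
  qed
  show ?thesis using card_inj_on_le[OF inj img fin] .
qed


lemma part_i:
  assumes p: "prime p" and pd: "p \<noteq> int d" and d: "d \<ge> 2" and x: "x \<in> Ad p d" and y: "y \<in> Ad p d"
  shows "fp_dot p d x y \<noteq> 0"
proof
  assume h: "fp_dot p d x y = 0"
  let ?s = "sigma p d"
  let ?S = "\<Sum>i<d. x i * y i"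
  have p1: "p > 1" using p by (simp add: prime_gt_1_int)
  have ss: "?s^2 * int d \<le> p" using sigma_sq[of p d] p1 d by auto
  have t: "\<And>i. i < d \<Longrightarrow> 1 \<le> x i * y i \<and> x i * y i \<le> ?s^2"
  proof -
    fix i assume "i < d"
    then have "1 \<le> x i" "x i \<le> ?s" "1 \<le> y i" "y i \<le> ?s" using x y by (auto simp: Ad_def)
    then show "1 \<le> x i * y i \<and> x i * y i \<le> ?s^2"
      using mult_mono[of 1 "x i" 1 "y i"] mult_mono[of "x i" ?s "y i" ?s]
      by (auto simp: power2_eq_square)
  qed
  have "?S \<ge> (\<Sum>i<d. 1)" by (rule sum_mono) (use t in auto)
  then have S1: "?S \<ge> 1" using d by simp
  have "?S \<le> (\<Sum>i<d. ?s^2)" by (rule sum_mono) (use t in auto)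
  then have S2: "?S \<le> ?s^2 * int d" by (simp add: mult.commute)
  have "p dvd ?S" using h by (simp add: fp_dot_def dvd_eq_mod_eq_0)
  then have "p \<le> ?S" using S1 by (simp add: zdvd_imp_le)
  then have "?s^2 * int d = p" using S2 ss by linarith
  then have "int d dvd p" by (metis dvd_triv_right)
  moreover have "int d \<ge> 0" by simp
  ultimately have "int d = 1 \<or> int d = p" using p unfolding prime_int_iff by blast
  then show False using d pd by auto
qed

lemma dot_smult:
  "fp_dot p d (fp_smult p c a) (fp_smult p c' b) = (c * c' * (\<Sum>i<d. a i * b i)) mod p"
proof -
  have "(\<Sum>i<d. (c * a i) mod p * ((c' * b i) mod p)) mod p
      = (\<Sum>i<d. ((c * a i) mod p * ((c' * b i) mod p)) mod p) mod p"
    by (simp add: mod_sum_eq)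
  also have "\<dots> = (\<Sum>i<d. ((c * a i) * (c' * b i)) mod p) mod p"
    by (simp add: mod_mult_eq)
  also have "\<dots> = (\<Sum>i<d. (c * a i) * (c' * b i)) mod p"
    by (simp add: mod_sum_eq)
  also have "(\<Sum>i<d. (c * a i) * (c' * b i)) = c * c' * (\<Sum>i<d. a i * b i)"
    by (simp add: sum_distrib_left algebra_simps)
  finally show ?thesis by (simp add: fp_dot_def fp_smult_def)
qed

lemma part_i_scaled:
  assumes p: "prime p" and pd: "p \<noteq> int d" and d: "d \<ge> 2"
    and x: "x \<in> scaled_Ad p d" and y: "y \<in> scaled_Ad p d"
  shows "fp_dot p d x y \<noteq> 0"
proof
  assume h: "fp_dot p d x y = 0"
  obtain c a where ca: "x = fp_smult p c a" "c \<in> {1..<p}" "a \<in> Ad p d" using x unfolding scaled_Ad_def by blast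
  obtain c' b where cb: "y = fp_smult p c' b" "c' \<in> {1..<p}" "b \<in> Ad p d" using y unfolding scaled_Ad_def by blast
  have "p dvd c * c' * (\<Sum>i<d. a i * b i)" using h ca cb dot_smult[of p d c a c' b] by (simp add: dvd_eq_mod_eq_0)
  then have "p dvd c \<or> p dvd c' \<or> p dvd (\<Sum>i<d. a i * b i)" using p by (simp add: prime_dvd_mult_iff)
  moreover have "\<not> p dvd c" using ca(2) by (auto simp: zdvd_not_zless)
  moreover have "\<not> p dvd c'" using cb(2) by (auto simp: zdvd_not_zless)
  moreover have "\<not> p dvd (\<Sum>i<d. a i * b i)" using part_i[OF p pd d ca(3) cb(3)] by (simp add: fp_dot_def dvd_eq_mod_eq_0)
  ultimately show False by blast
qed

lemma final_bound:
  assumes p: "prime p" and d: "d \<ge> 2" and big: "p \<ge> 36 * int d ^ 3"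
  shows "(2 / pi\<^sup>2) * (real_of_int p / real d) powr (real d / 2) \<le> real (nat (sigma p d))^d / 4"
proof -
  define s where "s = sqrt (real_of_int p / real d)"
  have p1: "p > 1" using p by (simp add: prime_gt_1_int)
  have pos: "real_of_int p / real d > 0" using p1 d by simp
  have "(real_of_int p / real d) powr (real d / 2) = ((real_of_int p / real d) powr (1/2)) powr real d"
    by (simp add: powr_powr)
  also have "\<dots> = s powr real d" using pos by (simp add: s_def powr_half_sqrt)
  also have "\<dots> = s ^ d" using pos by (simp add: s_def powr_realpow)
  finally have e: "(real_of_int p / real d) powr (real d / 2) = s ^ d" .
  have "real_of_int p / real d \<ge> 36 * real d ^ 2"
  proof -
    have "real_of_int (36 * int d ^ 3) \<le> real_of_int p" using big by (simp only: of_int_le_iff)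
    then have h: "36 * real d ^ 3 \<le> real_of_int p" by simp
    have "36 * real d ^ 2 * real d = 36 * real d ^ 3" by (simp add: power2_eq_square power3_eq_cube)
    then have "36 * real d ^ 2 * real d \<le> real_of_int p" using h by linarith
    then show ?thesis using d by (simp add: pos_le_divide_eq)
  qed
  then have "(6 * real d)^2 \<le> real_of_int p / real d" by (simp add: power_mult_distrib)
  then have "sqrt ((6 * real d)^2) \<le> s" unfolding s_def by (rule real_sqrt_le_mono)
  moreover have "sqrt ((6 * real d)^2) = 6 * real d" by (simp only: real_sqrt_abs)
  ultimately have s6: "s \<ge> 6 * real d" by linarith
  have dpos: "real d \<ge> 2" using d by simp
  have sp: "s > 0" using s6 dpos by linarith
  have n1: "real (nat (sigma p d)) \<ge> s - 1"
  proof -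
    have "real_of_int (sigma p d) > s - 1" unfolding sigma_def s_def by (rule real_of_int_floor_gt_diff_one)
    moreover have "sigma p d \<ge> 0" using sigma_sq(2)[of p d] p1 d by auto
    ultimately show ?thesis by simp
  qed
  have "s - 1 = s * (1 - 1/s)" using sp by (simp add: field_simps)
  have b: "1 - real d * (1/s) \<le> (1 - 1/s)^d"
    by (rule bern) (use sp s6 dpos in \<open>auto simp: field_simps\<close>)
  have "real d * (1/s) \<le> 1/6" using s6 sp dpos by (simp add: field_simps)
  then have b2: "(1 - 1/s)^d \<ge> 5/6" using b by linarith
  have "(s - 1)^d = s^d * (1 - 1/s)^d" using sp by (simp add: power_mult_distrib[symmetric] field_simps)
  also have "\<dots> \<ge> s^d * (5/6)" using b2 sp by (intro mult_left_mono) auto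
  finally have c1: "(s-1)^d \<ge> s^d * (5/6)" .
  have c2: "real (nat (sigma p d))^d \<ge> (s-1)^d" using n1 s6 dpos by (intro power_mono) auto
  have pi2: "pi^2 \<ge> 9.6"
  proof -
    have "(3.1::real) \<le> 3.141592653588" by simp
    then have "pi \<ge> 3.1" using pi_approx(1) by linarith
    then have "pi * pi \<ge> 3.1 * 3.1" by (intro mult_mono) auto
    then show ?thesis by (simp add: power2_eq_square)
  qed
  have "2 / pi^2 \<le> 2 / 9.6" using pi2 by (intro divide_left_mono) auto
  then have "(2 / pi^2) * s^d \<le> (2 / 9.6) * s^d" using sp by (intro mult_right_mono) auto
  also have "\<dots> = (s^d * (5/6)) / 4" by simp
  also have "\<dots> \<le> real (nat (sigma p d))^d / 4" using c1 c2 by simp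
  finally show ?thesis using e by simp
qed


theorem mainTheorem7:
  fixes d :: nat
  assumes "d \<ge> 2"
  shows "(\<forall>p::int. prime p \<and> p \<noteq> int d \<longrightarrow>
            (\<forall>x\<in>Ad p d. \<forall>y\<in>Ad p d. fp_dot p d x y \<noteq> 0) \<and>
            (\<forall>x\<in>scaled_Ad p d. \<forall>y\<in>scaled_Ad p d. fp_dot p d x y \<noteq> 0))
       \<and> (\<exists>e :: int \<Rightarrow> real. (e \<longlongrightarrow> 0) at_top \<and>
            (\<forall>p::int. prime p \<longrightarrow>
               real (card {L \<in> fp_lines p d. L \<inter> Ad p d \<noteq> {}})
                 \<ge> (1 - e p) * (2 / pi\<^sup>2) * (real_of_int p / real d) powr (real d / 2)))"
proof -
  have A: "\<forall>p::int. prime p \<and> p \<noteq> int d \<longrightarrow>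
            (\<forall>x\<in>Ad p d. \<forall>y\<in>Ad p d. fp_dot p d x y \<noteq> 0) \<and>
            (\<forall>x\<in>scaled_Ad p d. \<forall>y\<in>scaled_Ad p d. fp_dot p d x y \<noteq> 0)"
    using part_i[OF _ _ assms] part_i_scaled[OF _ _ assms] by blast
  define e where "e = (\<lambda>p::int. if p \<ge> 36 * int d ^ 3 then 0 else (1::real))"
  have lim: "(e \<longlongrightarrow> 0) at_top"
  proof (rule tendsto_eventually)
    show "\<forall>\<^sub>F x in at_top. e x = 0"
      using eventually_ge_at_top[of "36 * int d ^ 3"] by eventually_elim (simp add: e_def)
  qed
  have B: "\<forall>p::int. prime p \<longrightarrow>
               real (card {L \<in> fp_lines p d. L \<inter> Ad p d \<noteq> {}})
                 \<ge> (1 - e p) * (2 / pi\<^sup>2) * (real_of_int p / real d) powr (real d / 2)"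
  proof (intro allI impI)
    fix p :: int assume p: "prime p"
    show "real (card {L \<in> fp_lines p d. L \<inter> Ad p d \<noteq> {}})
                 \<ge> (1 - e p) * (2 / pi\<^sup>2) * (real_of_int p / real d) powr (real d / 2)"
    proof (cases "p \<ge> 36 * int d ^ 3")
      case True
      have p1: "p > 1" using p by (simp add: prime_gt_1_int)
      have s0: "sigma p d \<ge> 0" using sigma_sq(2)[of p d] p1 assms by auto
      have "(2 / pi\<^sup>2) * (real_of_int p / real d) powr (real d / 2) \<le> real (nat (sigma p d))^d / 4"
        by (rule final_bound[OF p assms True])
      also have "\<dots> \<le> real (card (Prim p d))" by (rule Prim_card[OF assms s0])
      also have "\<dots> \<le> real (card {L \<in> fp_lines p d. L \<inter> Ad p d \<noteq> {}})"
        using lines_ge[OF p assms] by simp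
      finally show ?thesis using True by (simp add: e_def)
    next
      case False then show ?thesis by (simp add: e_def)
    qed
  qed
  show ?thesis using A lim B by blast
qed

end
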